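(* Let $N,k,s,d$ be positive integers with $s\ge3$, and let $N\ge s+1$ be a prime number. Let $\Lambda\subseteq\mathbb{Z}_N$ belong to the family $\Lambda_d(2k,s)$. Then $$T_k(\Lambda)\le 2^{9k}k^k|\Lambda|^k(s+1)^{2d}\cdot 2^{\frac{2sk(\log k)^2}{\log(k^{2s}|\Lambda|^{s-2})}}.$$
   Context: $\mathbb{Z}_N=\mathbb{Z}/N\mathbb{Z}$; $\log$ is the logarithm to base $2$. For $B\subseteq\mathbb{Z}_N$, $T_k(B)=|\{(r_1,\dots,r_k,r_1',\dots,r_k')\in B^{2k}: r_1+\dots+r_k=r_1'+\dots+r_k'\}|$. Family $\Lambda_d(k,s)$ (for positive integers $k,s,d$): a set $\Lambda=\{\lambda_1,\dots,\lambda_m\}\subseteq\mathbb{Z}_N$ with $\Lambda\cap(-\Lambda)=\emptyset$ belongs to $\Lambda_d(k,s)$ if for every choice of integer vectors $\vec v_1=(v_1^{(1)},\dots,v_1^{(d)}),\dots,\vec v_m=(v_m^{(1)},\dots,v_m^{(d)})\in\mathbb{Z}^d$ with $|v_j^{(i)}|\le s$ for all $i,j$ and $\sum_{j=1}^m|v_j^{(i)}|\le k$ for every $i\in[d]$, satisfying $\lambda_1\vec v_1+\dots+\lambda_m\vec v_m\equiv0\pmod N$ (componentwise), the $d\times m$ matrix $(v_j^{(i)})_{i\in[d],j\in[m]}$ has rank at most $d-1$ (rank of an integer matrix taken over $\mathbb{Q}$). *)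

theory Defs
  imports "HOL-Library.FuncSet" "Jordan_Normal_Form.DL_Rank" Complex_Main
begin

text \<open>Elements of Z_N are represented by their canonical integer representatives
  in the range 0 to N-1. A subset of Z_N is a set of such integers.\<close>

definition zn_set :: "nat \<Rightarrow> int set \<Rightarrow> bool" where
  "zn_set N B \<longleftrightarrow> B \<subseteq> {0..<int N}"

definition T_k :: "nat \<Rightarrow> nat \<Rightarrow> int set \<Rightarrow> nat" where
  "T_k N k B = card {(r, r'). r \<in> {0..<k} \<rightarrow>\<^sub>E B \<and> r' \<in> {0..<k} \<rightarrow>\<^sub>E B \<and>
       (\<Sum>i<k. r i) mod int N = (\<Sum>i<k. r' i) mod int N}"

definition coeff_matrix :: "nat \<Rightarrow> int set \<Rightarrow> (int \<Rightarrow> nat \<Rightarrow> int) \<Rightarrow> rat mat" where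
  "coeff_matrix d Lam v =
     mat d (card Lam) (\<lambda>(i, j). of_int (v (sorted_list_of_set Lam ! j) i))"

definition in_Lambda_family :: "nat \<Rightarrow> nat \<Rightarrow> nat \<Rightarrow> nat \<Rightarrow> int set \<Rightarrow> bool" where
  "in_Lambda_family N d k s Lam \<longleftrightarrow>
     zn_set N Lam \<and>
     (\<forall>x\<in>Lam. (- x) mod int N \<notin> Lam) \<and>
     (\<forall>v :: int \<Rightarrow> nat \<Rightarrow> int.
        ((\<forall>x\<in>Lam. \<forall>i<d. \<bar>v x i\<bar> \<le> int s) \<and>
         (\<forall>i<d. (\<Sum>x\<in>Lam. \<bar>v x i\<bar>) \<le> int k) \<and>
         (\<forall>i<d. (\<Sum>x\<in>Lam. x * v x i) mod int N = 0))
        \<longrightarrow> vec_space.rank d (coeff_matrix d Lam v) \<le> d - 1)"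

end

theory Submission
  imports Defs "Jordan_Normal_Form.DL_Rank_Submatrix"
begin

lemma pairs_card_sum:
  fixes f :: "'a \<Rightarrow> 'c" and g :: "'b \<Rightarrow> 'c"
  assumes X: "finite X" and Y: "finite Y" and U: "finite U" and fU: "f ` X \<subseteq> U"
  shows "card {(a,b). a\<in>X \<and> b\<in>Y \<and> f a = g b} = (\<Sum>u\<in>U. card {a\<in>X. f a = u} * card {b\<in>Y. g b = u})"
proof -
  have eq: "{(a,b). a\<in>X \<and> b\<in>Y \<and> f a = g b} = (\<Union>u\<in>U. {a\<in>X. f a = u} \<times> {b\<in>Y. g b = u})"
    using fU by auto
  have "card (\<Union>u\<in>U. {a\<in>X. f a = u} \<times> {b\<in>Y. g b = u}) = (\<Sum>u\<in>U. card ({a\<in>X. f a = u} \<times> {b\<in>Y. g b = u}))"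
    by (rule card_UN_disjoint) (use X Y U in auto)
  then show ?thesis unfolding eq by (simp add: card_cartesian_product)
qed

lemma amgm_pairs:
  fixes f :: "'a \<Rightarrow> 'c" and g :: "'b \<Rightarrow> 'c"
  assumes X: "finite X" and Y: "finite Y"
  shows "2 * card {(a,b). a\<in>X \<and> b\<in>Y \<and> f a = g b} \<le>
     card {(a,b). a\<in>X \<and> b\<in>X \<and> f a = f b} + card {(a,b). a\<in>Y \<and> b\<in>Y \<and> g a = g b}"
proof -
  define U where "U = f ` X \<union> g ` Y"
  have U: "finite U" "f ` X \<subseteq> U" "g ` Y \<subseteq> U" using X Y by (auto simp: U_def)
  have 1: "card {(a,b). a\<in>X \<and> b\<in>Y \<and> f a = g b} = (\<Sum>u\<in>U. card {a\<in>X. f a = u} * card {b\<in>Y. g b = u})"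
    by (rule pairs_card_sum[OF X Y U(1,2)])
  have 2: "card {(a,b). a\<in>X \<and> b\<in>X \<and> f a = f b} = (\<Sum>u\<in>U. card {a\<in>X. f a = u} * card {b\<in>X. f b = u})"
    by (rule pairs_card_sum[OF X X U(1,2)])
  have 3: "card {(a,b). a\<in>Y \<and> b\<in>Y \<and> g a = g b} = (\<Sum>u\<in>U. card {a\<in>Y. g a = u} * card {b\<in>Y. g b = u})"
    by (rule pairs_card_sum[OF Y Y U(1,3)])
  have "\<And>a b::nat. 2 * (a * b) \<le> a * a + b * b"
  proof -
    fix a b :: nat
    have "int (2 * (a * b)) \<le> int (a * a + b * b)"
      using zero_le_power2[of "int a - int b"] by (simp add: power2_eq_square algebra_simps)
    then show "2 * (a * b) \<le> a * a + b * b" by linarith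
  qed
  then have "2 * (\<Sum>u\<in>U. card {a\<in>X. f a = u} * card {b\<in>Y. g b = u}) \<le>
     (\<Sum>u\<in>U. card {a\<in>X. f a = u} * card {b\<in>X. f b = u}) + (\<Sum>u\<in>U. card {a\<in>Y. g a = u} * card {b\<in>Y. g b = u})"
    unfolding sum_distrib_left sum.distrib[symmetric] by (intro sum_mono) auto
  then show ?thesis using 1 2 3 by simp
qed

definition cnt :: "nat set \<Rightarrow> (nat \<Rightarrow> 'a) \<Rightarrow> 'a \<Rightarrow> nat" where
  "cnt Q r x = card {i\<in>Q. r i = x}"

lemma cnt_pos_in_image:
  assumes "finite Q" "cnt Q r y \<ge> 1"
  shows "y \<in> r ` Q"
proof -
  have "{i\<in>Q. r i = y} \<noteq> {}" using assms(2) unfolding cnt_def by (metis card.empty not_one_le_zero)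
  then show ?thesis by auto
qed

lemma cnt_ge1:
  assumes "finite Q" "i \<in> Q"
  shows "cnt Q r (r i) \<ge> 1"
proof -
  have "{j\<in>Q. r j = r i} \<noteq> {}" "finite {j\<in>Q. r j = r i}" using assms by auto
  then show ?thesis unfolding cnt_def by (simp add: Suc_leI card_gt_0_iff)
qed

lemma finite_fibre:
  assumes "finite Q"
  shows "finite {r \<in> Q \<rightarrow>\<^sub>E A. \<forall>x. cnt Q r x = c x}"
proof (cases "{r \<in> Q \<rightarrow>\<^sub>E A. \<forall>x. cnt Q r x = c x} = {}")
  case True then show ?thesis by (metis finite.emptyI)
next
  case False
  then obtain r0 where r0: "r0 \<in> Q \<rightarrow>\<^sub>E A" "\<forall>x. cnt Q r0 x = c x" by auto
  have "{r \<in> Q \<rightarrow>\<^sub>E A. \<forall>x. cnt Q r x = c x} \<subseteq> Q \<rightarrow>\<^sub>E (r0 ` Q)"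
  proof
    fix r assume r: "r \<in> {r \<in> Q \<rightarrow>\<^sub>E A. \<forall>x. cnt Q r x = c x}"
    have "r i \<in> r0 ` Q" if i: "i \<in> Q" for i
    proof -
      have "cnt Q r (r i) \<ge> 1" using cnt_ge1[OF assms i] .
      moreover have "cnt Q r (r i) = cnt Q r0 (r i)" using r r0 by simp
      ultimately have "cnt Q r0 (r i) \<ge> 1" by simp
      then show ?thesis by (rule cnt_pos_in_image[OF assms])
    qed
    moreover have "r \<in> extensional Q" using r by (simp add: PiE_iff)
    ultimately show "r \<in> Q \<rightarrow>\<^sub>E (r0 ` Q)" by (simp add: PiE_iff)
  qed
  moreover have "finite (Q \<rightarrow>\<^sub>E (r0 ` Q))" using assms by (simp add: finite_PiE)
  ultimately show ?thesis using finite_subset by blast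
qed


lemma fibre_count:
  assumes "finite Q"
  shows "card {r \<in> Q \<rightarrow>\<^sub>E A. \<forall>x. cnt Q r x = c x} \<le> fact (card Q)"
  using assms
proof (induction Q arbitrary: c rule: finite_induct)
  case empty
  have s: "{r \<in> {} \<rightarrow>\<^sub>E A. \<forall>x. cnt {} r x = c x} \<subseteq> {\<lambda>_. undefined}" by auto
  have "card {r \<in> {} \<rightarrow>\<^sub>E A. \<forall>x. cnt {} r x = c x} \<le> card {\<lambda>_::nat. undefined::'a}"
    by (rule card_mono[OF _ s]) simp
  then have "card {r \<in> {} \<rightarrow>\<^sub>E A. \<forall>x. cnt {} r x = c x} \<le> 1" by simp
  then show ?case by simp
next
  case (insert a Q)
  define F where "F = {r \<in> insert a Q \<rightarrow>\<^sub>E A. \<forall>x. cnt (insert a Q) r x = c x}"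
  define Y where "Y = (\<lambda>r. r a) ` F"
  define G where "G = (\<lambda>y. {r \<in> Q \<rightarrow>\<^sub>E A. \<forall>x. cnt Q r x = (c(y := c y - 1)) x})"
  have finG: "finite (G y)" for y unfolding G_def by (rule finite_fibre[OF insert(1)])
  have cardG: "card (G y) \<le> fact (card Q)" for y unfolding G_def by (rule insert.IH)
  have cardY: "card Y \<le> card (insert a Q)"
  proof (cases "F = {}")
    case True then show ?thesis by (simp add: Y_def)
  next
    case False
    then obtain r0 where r0: "r0 \<in> F" by auto
    have "Y \<subseteq> r0 ` insert a Q"
    proof
      fix y assume "y \<in> Y"
      then obtain r where r: "r \<in> F" "y = r a" by (auto simp: Y_def)
      have "cnt (insert a Q) r y \<ge> 1" using cnt_ge1[of "insert a Q" a r] r insert(1) by simp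
      moreover have "cnt (insert a Q) r y = cnt (insert a Q) r0 y" using r r0 by (simp add: F_def)
      ultimately have "cnt (insert a Q) r0 y \<ge> 1" by simp
      then show "y \<in> r0 ` insert a Q" by (rule cnt_pos_in_image[OF finite.insertI[OF insert(1)]])
    qed
    then have "card Y \<le> card (r0 ` insert a Q)" by (rule card_mono[rotated]) (use insert(1) in simp)
    also have "\<dots> \<le> card (insert a Q)" by (rule card_image_le) (use insert(1) in simp)
    finally show ?thesis .
  qed
  have finY: "finite Y"
  proof (cases "F = {}")
    case True then show ?thesis by (simp add: Y_def)
  next
    case False
    then obtain r0 where r0: "r0 \<in> F" by auto
    have "Y \<subseteq> r0 ` insert a Q"
    proof
      fix y assume "y \<in> Y"
      then obtain r where r: "r \<in> F" "y = r a" by (auto simp: Y_def)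
      have "cnt (insert a Q) r y \<ge> 1" using cnt_ge1[of "insert a Q" a r] r insert(1) by simp
      moreover have "cnt (insert a Q) r y = cnt (insert a Q) r0 y" using r r0 by (simp add: F_def)
      ultimately have "cnt (insert a Q) r0 y \<ge> 1" by simp
      then show "y \<in> r0 ` insert a Q" by (rule cnt_pos_in_image[OF finite.insertI[OF insert(1)]])
    qed
    then show ?thesis by (rule finite_subset) (use insert(1) in simp)
  qed
  define \<phi> where "\<phi> = (\<lambda>r::nat \<Rightarrow> 'a. (r a, r(a := undefined)))"
  have inj: "inj_on \<phi> F"
  proof (rule inj_onI)
    fix r r' assume "r \<in> F" "r' \<in> F" "\<phi> r = \<phi> r'"
    then show "r = r'" unfolding \<phi>_def by (metis fun_upd_triv fun_upd_upd prod.inject)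
  qed
  have sub: "\<phi> ` F \<subseteq> Sigma Y G"
  proof
    fix p assume "p \<in> \<phi> ` F"
    then obtain r where r: "r \<in> F" "p = \<phi> r" by auto
    have rP: "r \<in> insert a Q \<rightarrow>\<^sub>E A" and rc: "\<forall>x. cnt (insert a Q) r x = c x" using r by (auto simp: F_def)
    have 1: "r(a := undefined) \<in> Q \<rightarrow>\<^sub>E A" using rP insert(2) by (auto simp: PiE_def extensional_def Pi_def)
    have "cnt Q (r(a := undefined)) x = (c(r a := c (r a) - 1)) x" for x
    proof -
      have e1: "{i\<in>Q. (r(a := undefined)) i = x} = {i\<in>Q. r i = x}" using insert(2) by auto
      have e2: "{i\<in>insert a Q. r i = x} = (if r a = x then insert a {i\<in>Q. r i = x} else {i\<in>Q. r i = x})"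
        by auto
      have "cnt (insert a Q) r x = (if r a = x then card {i\<in>Q. r i = x} + 1 else card {i\<in>Q. r i = x})"
        unfolding cnt_def e2 using insert(1,2) by auto
      then show ?thesis using rc unfolding cnt_def e1 by (auto split: if_splits)
    qed
    then have "r(a := undefined) \<in> G (r a)" using 1 by (auto simp: G_def)
    moreover have "r a \<in> Y" using r by (auto simp: Y_def)
    ultimately show "p \<in> Sigma Y G" using r by (auto simp: \<phi>_def)
  qed
  have "card F \<le> card (Sigma Y G)"
    by (rule card_inj_on_le[OF inj sub]) (use finY finG in auto)
  also have "\<dots> = (\<Sum>y\<in>Y. card (G y))" by (rule card_SigmaI) (use finY finG in auto)
  also have "\<dots> \<le> (\<Sum>y\<in>Y. fact (card Q))" by (rule sum_mono) (rule cardG)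
  also have "\<dots> = card Y * fact (card Q)" by simp
  also have "\<dots> \<le> card (insert a Q) * fact (card Q)" using cardY by simp
  also have "\<dots> = fact (card (insert a Q))" using insert(1,2) by simp
  finally show ?case unfolding F_def .
qed

definition dep_prop :: "'a set \<Rightarrow> nat \<Rightarrow> ('a \<Rightarrow> int) set \<Rightarrow> bool" where
  "dep_prop L d S \<longleftrightarrow> (\<forall>ws. (\<forall>i<d. ws i \<in> S) \<longrightarrow> (\<forall>J. J \<subseteq> L \<longrightarrow> card J = d \<longrightarrow>
     (\<exists>c::nat\<Rightarrow>rat. (\<exists>i<d. c i \<noteq> 0) \<and> (\<forall>x\<in>J. (\<Sum>i<d. c i * of_int (ws i x)) = 0))))"

definition box :: "'a set \<Rightarrow> nat \<Rightarrow> ('a \<Rightarrow> int) set" where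
  "box L s = {w. (\<forall>x. x \<notin> L \<longrightarrow> w x = 0) \<and> (\<forall>x\<in>L. \<bar>w x\<bar> \<le> int s)}"

lemma finite_box:
  assumes "finite L"
  shows "finite (box L s)"
proof -
  have "box L s \<subseteq> (\<lambda>f x. if x \<in> L then f x else 0) ` (L \<rightarrow>\<^sub>E {-int s..int s})"
  proof
    fix w assume w: "w \<in> box L s"
    have "restrict w L \<in> L \<rightarrow>\<^sub>E {-int s..int s}" using w by (auto simp: box_def abs_le_iff)
    moreover have "w = (\<lambda>x. if x \<in> L then restrict w L x else 0)" using w by (auto simp: box_def)
    ultimately show "w \<in> (\<lambda>f x. if x \<in> L then f x else 0) ` (L \<rightarrow>\<^sub>E {-int s..int s})" by blast
  qed
  moreover have "finite (L \<rightarrow>\<^sub>E {-int s..int s})" using assms by (simp add: finite_PiE)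
  ultimately show ?thesis using finite_subset by blast
qed

lemma depE:
  assumes "dep_prop L d S" "\<forall>i<d. ws i \<in> S" "J \<subseteq> L" "card J = d"
  shows "\<exists>c::nat\<Rightarrow>rat. (\<exists>i<d. c i \<noteq> 0) \<and> (\<forall>x\<in>J. (\<Sum>i<d. c i * of_int (ws i x)) = 0)"
  using assms unfolding dep_prop_def by simp

lemma dep_one:
  assumes "S \<subseteq> box L s" "dep_prop L 1 S"
  shows "S \<subseteq> {\<lambda>_. 0}"
proof
  fix w assume w: "w \<in> S"
  have "w x = 0" for x
  proof (cases "x \<in> L")
    case True
    have h1: "\<forall>i<1. (\<lambda>_. w) i \<in> S" using w by simp
    have h2: "{x} \<subseteq> L" "card {x} = 1" using True by auto
    obtain c :: "nat \<Rightarrow> rat" where c: "(\<exists>i<1. c i \<noteq> 0) \<and> (\<forall>y\<in>{x}. (\<Sum>i<1. c i * of_int ((\<lambda>_. w) i y)) = 0)"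
      using depE[OF assms(2) h1 h2] by (rule exE)
    then show ?thesis by auto
  next
    case False
    then show ?thesis using w assms(1) by (auto simp: box_def)
  qed
  then show "w \<in> {\<lambda>_. 0}" by auto
qed

lemma solve_last:
  fixes A cd wx :: rat
  assumes "A + cd * wx = 0" "cd \<noteq> 0"
  shows "wx = - (A / cd)"
  using assms by (simp add: field_simps)

lemma box_count:
  assumes "finite L"
  shows "S \<subseteq> box L s \<Longrightarrow> d \<ge> 1 \<Longrightarrow> dep_prop L d S \<Longrightarrow> card S \<le> (2*s+1)^(d-1)"
  using assms
proof (induction L arbitrary: d S rule: finite_induct)
  case empty
  have "S \<subseteq> {\<lambda>_. 0}" using empty(1) by (auto simp: box_def)
  then have "card S \<le> card {\<lambda>_::'a. 0::int}" by (rule card_mono[rotated]) simp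
  also have "\<dots> \<le> (2*s+1)^(d-1)" by simp
  finally show ?case .
next
  case (insert a L)
  show ?case
  proof (cases "d = 1")
    case True
    then have "S \<subseteq> {\<lambda>_. 0}" using dep_one[OF insert.prems(1)] insert.prems(3) by simp
    then have "card S \<le> card {\<lambda>_::'a. 0::int}" by (rule card_mono[rotated]) simp
    also have "\<dots> \<le> (2*s+1)^(d-1)" by simp
    finally show ?thesis .
  next
    case False
    define e where "e = d - 1"
    have d: "d = Suc e" and e1: "e \<ge> 1" using insert.prems(2) False by (auto simp: e_def)
    define \<pi> where "\<pi> = (\<lambda>w::'a \<Rightarrow> int. w(a := 0))"
    have \<pi>_eq: "\<pi> w x = w x" if "x \<in> L" for w x using that insert(2) by (auto simp: \<pi>_def)
    have \<pi>box: "\<pi> ` S \<subseteq> box L s" using insert.prems(1) by (auto simp: \<pi>_def box_def)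
    have decomp: "w = (\<pi> w)(a := w a)" for w by (auto simp: \<pi>_def)
    show ?thesis
    proof (cases "dep_prop L e (\<pi> ` S)")
      case True
      have IH: "card (\<pi> ` S) \<le> (2*s+1)^(e-1)" by (rule insert.IH[OF \<pi>box e1 True])
      have sub: "S \<subseteq> (\<lambda>(u,j). u(a := j)) ` (\<pi> ` S \<times> {-int s..int s})"
      proof
        fix w assume w: "w \<in> S"
        have "\<bar>w a\<bar> \<le> int s" using w insert.prems(1) by (auto simp: box_def)
        then have mem: "(\<pi> w, w a) \<in> \<pi> ` S \<times> {-int s..int s}" using w by auto
        show "w \<in> (\<lambda>(u,j). u(a := j)) ` (\<pi> ` S \<times> {-int s..int s})"
          by (rule image_eqI[where x="(\<pi> w, w a)", OF _ mem]) (auto simp: \<pi>_def)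
      qed
      have finS: "finite (\<pi> ` S)" using finite_box[OF insert(1)] \<pi>box finite_subset by blast
      have "card S \<le> card ((\<lambda>(u,j). u(a := j)) ` (\<pi> ` S \<times> {-int s..int s}))"
        by (rule card_mono[OF _ sub]) (use finS in simp)
      also have "\<dots> \<le> card (\<pi> ` S \<times> {-int s..int s})" by (rule card_image_le) (use finS in simp)
      also have "\<dots> = card (\<pi> ` S) * (2*s+1)"
      proof -
        have "card {-int s..int s} = 2*s+1" by simp
        then show ?thesis by (simp add: card_cartesian_product)
      qed
      also have "\<dots> \<le> (2*s+1)^(e-1) * (2*s+1)" using IH by (rule mult_le_mono1)
      also have "\<dots> = (2*s+1)^(Suc (e-1))" by (rule power_Suc2[symmetric])
      also have "Suc (e-1) = d - 1" using d e1 by simp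
      finally show ?thesis by simp
    next
      case False
      have "\<exists>ws'. (\<forall>i<e. ws' i \<in> \<pi> ` S) \<and> (\<exists>J0\<subseteq>L. card J0 = e \<and>
         (\<forall>c::nat\<Rightarrow>rat. (\<forall>i<e. c i = 0) \<or> (\<exists>x\<in>J0. (\<Sum>i<e. c i * of_int (ws' i x)) \<noteq> 0)))"
        using False unfolding dep_prop_def by simp
      then obtain ws' J0 where ws': "\<forall>i<e. ws' i \<in> \<pi> ` S" and J0: "J0 \<subseteq> L" "card J0 = e"
        and indep: "\<forall>c::nat\<Rightarrow>rat. (\<forall>i<e. c i = 0) \<or> (\<exists>x\<in>J0. (\<Sum>i<e. c i * of_int (ws' i x)) \<noteq> 0)"
        by (elim exE conjE)
      have "\<forall>i. \<exists>w. i < e \<longrightarrow> w \<in> S \<and> \<pi> w = ws' i"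
      proof
        fix i show "\<exists>w. i < e \<longrightarrow> w \<in> S \<and> \<pi> w = ws' i"
        proof (cases "i < e")
          case True
          then have "ws' i \<in> \<pi> ` S" using ws' by simp
          then obtain w where "w \<in> S" "ws' i = \<pi> w" by (rule imageE)
          then show ?thesis by auto
        qed simp
      qed
      then have "\<exists>ws. \<forall>i. i < e \<longrightarrow> ws i \<in> S \<and> \<pi> (ws i) = ws' i" by (rule choice)
      then obtain ws where ws0: "\<forall>i. i < e \<longrightarrow> ws i \<in> S \<and> \<pi> (ws i) = ws' i" by (elim exE)
      have ws: "ws i \<in> S \<and> \<pi> (ws i) = ws' i" if "i < e" for i using ws0 that by simp
      have wsx: "ws' i x = ws i x" if "i < e" "x \<in> J0" for i x
        using ws[OF that(1)] \<pi>_eq[of x "ws i"] that J0(1) by auto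
      have indep2: "\<And>c::nat\<Rightarrow>rat. (\<forall>x\<in>J0. (\<Sum>i<e. c i * of_int (ws i x)) = 0) \<Longrightarrow> (\<forall>i<e. c i = 0)"
      proof -
        fix c :: "nat \<Rightarrow> rat" assume h: "\<forall>x\<in>J0. (\<Sum>i<e. c i * of_int (ws i x)) = 0"
        have "\<forall>x\<in>J0. (\<Sum>i<e. c i * of_int (ws' i x)) = 0"
        proof
          fix x assume x: "x \<in> J0"
          have "(\<Sum>i<e. c i * of_int (ws' i x)) = (\<Sum>i<e. c i * of_int (ws i x))"
            by (rule sum.cong) (use wsx x in auto)
          then show "(\<Sum>i<e. c i * of_int (ws' i x)) = 0" using h x by simp
        qed
        then show "\<forall>i<e. c i = 0" using indep[rule_format, of c] by auto
      qed
      define J where "J = insert a J0"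
      have aJ0: "a \<notin> J0" using J0(1) insert(2) by auto
      have finJ0: "finite J0" using J0(1) insert(1) finite_subset by blast
      have J: "J \<subseteq> insert a L" "card J = d" using J0 aJ0 finJ0 d by (auto simp: J_def)
      have key: "\<exists>\<beta>::nat\<Rightarrow>rat. \<forall>x\<in>J. of_int (w x) = (\<Sum>i<e. \<beta> i * of_int (ws i x))" if w: "w \<in> S" for w
      proof -
        define t where "t = (\<lambda>i. if i < e then ws i else w)"
        have tS: "\<forall>i<d. t i \<in> S" using ws w by (auto simp: t_def)
        obtain c :: "nat \<Rightarrow> rat" where c0: "(\<exists>i<d. c i \<noteq> 0) \<and> (\<forall>x\<in>J. (\<Sum>i<d. c i * of_int (t i x)) = 0)"
          using depE[OF insert.prems(3) tS J] by (rule exE)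
        have c: "\<exists>i<d. c i \<noteq> 0" "\<forall>x\<in>J. (\<Sum>i<d. c i * of_int (t i x)) = 0" using c0 by auto
        have sumsplit: "(\<Sum>i<d. c i * of_int (t i x)) = (\<Sum>i<e. c i * of_int (ws i x)) + c e * of_int (w x)" for x
        proof -
          have "(\<Sum>i<d. c i * of_int (t i x)) = (\<Sum>i<e. c i * of_int (t i x)) + c e * of_int (t e x)"
            unfolding d by simp
          moreover have "(\<Sum>i<e. c i * of_int (t i x)) = (\<Sum>i<e. c i * of_int (ws i x))"
            by (rule sum.cong) (auto simp: t_def)
          ultimately show ?thesis by (simp add: t_def)
        qed
        have ce: "c e \<noteq> 0"
        proof
          assume ce: "c e = 0"
          have "\<forall>x\<in>J0. (\<Sum>i<e. c i * of_int (ws i x)) = 0" using c(2) sumsplit ce by (auto simp: J_def)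
          then have "\<forall>i<e. c i = 0" by (rule indep2)
          then have "\<forall>i<d. c i = 0" using ce d less_Suc_eq by auto
          then show False using c(1) by blast
        qed
        have "\<forall>x\<in>J. of_int (w x) = (\<Sum>i<e. (- c i / c e) * of_int (ws i x))"
        proof
          fix x assume x: "x \<in> J"
          have "(\<Sum>i<e. c i * of_int (ws i x)) + c e * of_int (w x) = 0" using c(2) x sumsplit by simp
          from solve_last[OF this ce] have "of_int (w x) = - ((\<Sum>i<e. c i * of_int (ws i x)) / c e)" .
          also have "\<dots> = (\<Sum>i<e. (- c i / c e) * of_int (ws i x))"
            by (simp add: sum_divide_distrib sum_negf)
          finally show "of_int (w x) = (\<Sum>i<e. (- c i / c e) * of_int (ws i x))" .
        qed
        then show ?thesis by (rule exI[where x="\<lambda>i. - c i / c e"])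
      qed
      have inj: "inj_on \<pi> S"
      proof (rule inj_onI)
        fix w w' assume w: "w \<in> S" and w': "w' \<in> S" and eq: "\<pi> w = \<pi> w'"
        obtain \<beta> :: "nat \<Rightarrow> rat" where \<beta>: "\<forall>x\<in>J. of_int (w x) = (\<Sum>i<e. \<beta> i * of_int (ws i x))" using key[OF w] by blast
        obtain \<beta>' :: "nat \<Rightarrow> rat" where \<beta>': "\<forall>x\<in>J. of_int (w' x) = (\<Sum>i<e. \<beta>' i * of_int (ws i x))" using key[OF w'] by blast
        have "\<forall>x\<in>J0. (\<Sum>i<e. (\<beta> i - \<beta>' i) * of_int (ws i x)) = 0"
        proof
          fix x assume x: "x \<in> J0"
          have "w x = w' x" using eq \<pi>_eq[of x w] \<pi>_eq[of x w'] x J0(1) by auto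
          then have "(\<Sum>i<e. \<beta> i * of_int (ws i x)) = (\<Sum>i<e. \<beta>' i * of_int (ws i x))"
            using \<beta> \<beta>' x by (auto simp: J_def)
          then show "(\<Sum>i<e. (\<beta> i - \<beta>' i) * of_int (ws i x)) = 0"
            by (simp add: left_diff_distrib sum_subtractf)
        qed
        then have "\<forall>i<e. \<beta> i - \<beta>' i = 0" by (rule indep2)
        then have "(\<Sum>i<e. \<beta> i * of_int (ws i a)) = (\<Sum>i<e. \<beta>' i * of_int (ws i a))"
          by (intro sum.cong) auto
        then have "(of_int (w a) :: rat) = of_int (w' a)" using \<beta> \<beta>' by (auto simp: J_def)
        then have "w a = w' a" by simp
        show "w = w'"
        proof (rule ext)
          fix x show "w x = w' x" using fun_cong[OF eq, of x] \<open>w a = w' a\<close> by (cases "x = a") (auto simp: \<pi>_def)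
        qed
      qed
      have depd: "dep_prop L d (\<pi> ` S)"
        unfolding dep_prop_def
      proof (intro allI impI)
        fix us :: "nat \<Rightarrow> 'a \<Rightarrow> int" and J' :: "'a set"
        assume us: "\<forall>i<d. us i \<in> \<pi> ` S" and J': "J' \<subseteq> L" "card J' = d"
        have "\<forall>i. \<exists>w. i < d \<longrightarrow> w \<in> S \<and> \<pi> w = us i"
        proof
          fix i show "\<exists>w. i < d \<longrightarrow> w \<in> S \<and> \<pi> w = us i"
          proof (cases "i < d")
            case True
            then have "us i \<in> \<pi> ` S" using us by simp
            then obtain w where "w \<in> S" "us i = \<pi> w" by (rule imageE)
            then show ?thesis by auto
          qed simp
        qed
        then have "\<exists>vs. \<forall>i. i < d \<longrightarrow> vs i \<in> S \<and> \<pi> (vs i) = us i" by (rule choice)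
        then obtain vs where vs0: "\<forall>i. i < d \<longrightarrow> vs i \<in> S \<and> \<pi> (vs i) = us i" by (elim exE)
        have vs: "vs i \<in> S \<and> \<pi> (vs i) = us i" if "i < d" for i using vs0 that by simp
        have vS: "\<forall>i<d. vs i \<in> S" using vs by blast
        have J'a: "J' \<subseteq> insert a L" using J' by auto
        obtain c :: "nat \<Rightarrow> rat" where c0: "(\<exists>i<d. c i \<noteq> 0) \<and> (\<forall>x\<in>J'. (\<Sum>i<d. c i * of_int (vs i x)) = 0)"
          using depE[OF insert.prems(3) vS J'a J'(2)] by (rule exE)
        have c: "\<exists>i<d. c i \<noteq> 0" "\<forall>x\<in>J'. (\<Sum>i<d. c i * of_int (vs i x)) = 0" using c0 by auto
        have "\<forall>x\<in>J'. (\<Sum>i<d. c i * of_int (us i x)) = 0"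
        proof
          fix x assume x: "x \<in> J'"
          have "(\<Sum>i<d. c i * of_int (us i x)) = (\<Sum>i<d. c i * of_int (vs i x))"
          proof (rule sum.cong)
            fix i assume "i \<in> {..<d}"
            then have "us i x = vs i x" using vs[of i] \<pi>_eq[of x "vs i"] x J'(1) by auto
            then show "c i * of_int (us i x) = c i * of_int (vs i x)" by simp
          qed simp
          then show "(\<Sum>i<d. c i * of_int (us i x)) = 0" using c(2) x by simp
        qed
        then show "\<exists>c::nat\<Rightarrow>rat. (\<exists>i<d. c i \<noteq> 0) \<and> (\<forall>x\<in>J'. (\<Sum>i<d. c i * of_int (us i x)) = 0)"
          using c(1) by blast
      qed
      have "card S = card (\<pi> ` S)" using inj by (simp add: card_image)
      also have "\<dots> \<le> (2*s+1)^(d-1)" by (rule insert.IH[OF \<pi>box insert.prems(2) depd])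
      finally show ?thesis .
    qed
  qed
qed

definition Sset :: "nat \<Rightarrow> nat \<Rightarrow> nat \<Rightarrow> int set \<Rightarrow> (int \<Rightarrow> int) set" where
  "Sset N K s Lam = {v \<in> box Lam s. (\<Sum>x\<in>Lam. \<bar>v x\<bar>) \<le> int K \<and> (\<Sum>x\<in>Lam. x * v x) mod int N = 0}"

lemma family_dep:
  assumes fam: "in_Lambda_family N d K s Lam" and d1: "d \<ge> 1"
  shows "dep_prop Lam d (Sset N K s Lam)"
  unfolding dep_prop_def
proof (intro allI impI)
  fix ws :: "nat \<Rightarrow> int \<Rightarrow> int" and J :: "int set"
  assume wsS: "\<forall>i<d. ws i \<in> Sset N K s Lam" and JL: "J \<subseteq> Lam" and cJ: "card J = d"
  have finL: "finite Lam" using fam unfolding in_Lambda_family_def zn_set_def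
    using finite_atLeastLessThan_int finite_subset by blast
  define v where "v = (\<lambda>x i. ws i x)"
  have vc: "(\<forall>x\<in>Lam. \<forall>i<d. \<bar>v x i\<bar> \<le> int s) \<and> (\<forall>i<d. (\<Sum>x\<in>Lam. \<bar>v x i\<bar>) \<le> int K) \<and>
         (\<forall>i<d. (\<Sum>x\<in>Lam. x * v x i) mod int N = 0)"
    using wsS by (auto simp: v_def Sset_def box_def)
  have rk: "vec_space.rank d (coeff_matrix d Lam v) \<le> d - 1"
    using fam vc unfolding in_Lambda_family_def by blast
  define m where "m = card Lam"
  define xs where "xs = sorted_list_of_set Lam"
  have xs: "distinct xs" "set xs = Lam" "length xs = m" using finL by (auto simp: xs_def m_def)
  define A :: "rat mat" where "A = coeff_matrix d Lam v"
  have A: "A \<in> carrier_mat d m" by (simp add: A_def coeff_matrix_def m_def)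
  have Aij: "A $$ (i, j) = of_int (ws i (xs ! j))" if "i < d" "j < m" for i j
    using that by (simp add: A_def coeff_matrix_def m_def xs_def v_def)
  define J' where "J' = {j. j < m \<and> xs ! j \<in> J}"
  have bij: "bij_betw (nth xs) {..<m} Lam" using xs by (simp add: bij_betw_nth)
  have imJ': "nth xs ` J' = J"
  proof
    show "nth xs ` J' \<subseteq> J" by (auto simp: J'_def)
    show "J \<subseteq> nth xs ` J'"
    proof
      fix x assume x: "x \<in> J"
      then have "x \<in> set xs" using JL xs by auto
      then obtain j where "j < length xs" "xs ! j = x" by (auto simp: in_set_conv_nth)
      then show "x \<in> nth xs ` J'" using x xs by (auto simp: J'_def)
    qed
  qed
  have injJ': "inj_on (nth xs) J'"
    using bij unfolding bij_betw_def by (rule inj_on_subset[OF conjunct1]) (auto simp: J'_def)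
  have cJ': "card J' = d" using card_image[OF injJ'] imJ' cJ by simp
  have cJ'2: "card {j. j < dim_col A \<and> j \<in> J'} = d"
  proof -
    have "{j. j < dim_col A \<and> j \<in> J'} = J'" using A by (auto simp: J'_def)
    then show ?thesis using cJ' by simp
  qed
  define BB :: "rat mat" where "BB = submatrix A UNIV J'"
  have cR: "card {i. i < dim_row A \<and> i \<in> (UNIV::nat set)} = d" using A by simp
  have BB: "BB \<in> carrier_mat d d" unfolding BB_def carrier_mat_def using dim_submatrix[of A UNIV J'] cR cJ'2 by simp
  have detB: "det BB = 0"
  proof (rule ccontr)
    assume "det BB \<noteq> 0"
    then have "card {j. j < m \<and> j \<in> J'} \<le> vec_space.rank d A"
      using vec_space.rank_gt_minor[OF A] unfolding BB_def by blast
    moreover have "{j. j < m \<and> j \<in> J'} = J'" by (auto simp: J'_def)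
    ultimately have "d \<le> vec_space.rank d A" using cJ' by simp
    then show False using rk d1 unfolding A_def by simp
  qed
  have BT: "transpose_mat BB \<in> carrier_mat d d" using BB by simp
  have "det (transpose_mat BB) = 0" using det_transpose[OF BB] detB by simp
  then obtain y where y: "y \<in> carrier_vec d" "y \<noteq> 0\<^sub>v d" "transpose_mat BB *\<^sub>v y = 0\<^sub>v d"
    using det_0_iff_vec_prod_zero_field[OF BT] by blast
  define c where "c = (\<lambda>i. y $ i)"
  have cnz: "\<exists>i<d. c i \<noteq> 0"
  proof (rule ccontr)
    assume "\<not> (\<exists>i<d. c i \<noteq> 0)"
    then have "y = 0\<^sub>v d" using y(1) by (auto simp: c_def vec_eq_iff)
    then show False using y(2) by simp
  qed
  have "\<forall>x\<in>J. (\<Sum>i<d. c i * of_int (ws i x)) = 0"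
  proof
    fix x assume x: "x \<in> J"
    then obtain j0 where j0: "j0 \<in> J'" "xs ! j0 = x" using imJ' by auto
    have j0m: "j0 < m" using j0 by (auto simp: J'_def)
    define jj where "jj = card {a\<in>J'. a < j0}"
    have finJ': "finite J'" by (auto simp: J'_def)
    have "{a\<in>J'. a < j0} \<subset> J'" using j0 by auto
    then have jjd: "jj < d" unfolding jj_def using psubset_card_mono[OF finJ'] cJ' by simp
    have Bent: "BB $$ (i, jj) = of_int (ws i x)" if i: "i < d" for i
    proof -
      have "submatrix A UNIV J' $$ (card {a\<in>(UNIV::nat set). a < i}, card {a\<in>J'. a < j0}) = A $$ (i, j0)"
        by (rule submatrix_index_card) (use A i j0m j0 in auto)
      moreover have "card {a\<in>(UNIV::nat set). a < i} = i" by simp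
      ultimately show ?thesis using Aij[OF i j0m] j0 by (simp add: BB_def jj_def)
    qed
    have "0 = (transpose_mat BB *\<^sub>v y) $ jj" using y(3) jjd by simp
    also have "\<dots> = row (transpose_mat BB) jj \<bullet> y" using BT jjd by simp
    also have "\<dots> = (\<Sum>i\<in>{0..<d}. row (transpose_mat BB) jj $ i * y $ i)" using y(1) by (simp add: scalar_prod_def)
    also have "\<dots> = (\<Sum>i<d. c i * of_int (ws i x))"
    proof (rule sum.cong)
      show "{0..<d} = {..<d}" by auto
    next
      fix i assume "i \<in> {..<d}"
      then have i: "i < d" by simp
      have "row (transpose_mat BB) jj $ i = BB $$ (i, jj)" using BB i jjd by simp
      then show "row (transpose_mat BB) jj $ i * y $ i = c i * of_int (ws i x)"
        using Bent[OF i] by (simp add: c_def)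
    qed
    finally show "(\<Sum>i<d. c i * of_int (ws i x)) = 0" by simp
  qed
  then show "\<exists>c::nat\<Rightarrow>rat. (\<exists>i<d. c i \<noteq> 0) \<and> (\<forall>x\<in>J. (\<Sum>i<d. c i * of_int (ws i x)) = 0)"
    using cnz by blast
qed

definition TQ :: "nat \<Rightarrow> int set \<Rightarrow> nat set \<Rightarrow> nat" where
  "TQ N L Q = card {(r, r'). r \<in> Q \<rightarrow>\<^sub>E L \<and> r' \<in> Q \<rightarrow>\<^sub>E L \<and>
       (\<Sum>i\<in>Q. r i) mod int N = (\<Sum>i\<in>Q. r' i) mod int N}"

lemma T_k_TQ: "T_k N k L = TQ N L {0..<k}"
  unfolding T_k_def TQ_def by (simp add: lessThan_atLeast0)

lemma cnt_out:
  assumes "r \<in> Q \<rightarrow>\<^sub>E L" "x \<notin> L"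
  shows "cnt Q r x = 0"
proof -
  have "{i\<in>Q. r i = x} = {}" using assms by auto
  then show ?thesis unfolding cnt_def by (simp only: card.empty)
qed

lemma sum_cnt:
  assumes "r \<in> Q \<rightarrow>\<^sub>E L" "finite Q" "finite L"
  shows "(\<Sum>x\<in>L. cnt Q r x) = card Q"
proof -
  have "(\<Sum>x\<in>L. sum (\<lambda>_. 1::nat) {i\<in>Q. r i = x}) = sum (\<lambda>_. 1) Q"
    by (rule sum.group) (use assms in auto)
  then show ?thesis by (simp add: cnt_def)
qed

lemma sum_wcnt:
  assumes "r \<in> Q \<rightarrow>\<^sub>E L" "finite Q" "finite L"
  shows "(\<Sum>x\<in>L. x * int (cnt Q r x)) = (\<Sum>i\<in>Q. r i)"
proof -
  have "(\<Sum>x\<in>L. sum r {i\<in>Q. r i = x}) = sum r Q"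
    by (rule sum.group) (use assms in auto)
  moreover have wx: "sum r {i\<in>Q. r i = x} = x * int (cnt Q r x)" for x
  proof -
    have "sum r {i\<in>Q. r i = x} = sum (\<lambda>_. x) {i\<in>Q. r i = x}" by (rule sum.cong) auto
    then show ?thesis by (simp add: cnt_def mult.commute)
  qed
  have "(\<Sum>x\<in>L. x * int (cnt Q r x)) = (\<Sum>x\<in>L. sum r {i\<in>Q. r i = x})"
    by (rule sum.cong[OF refl]) (rule wx[symmetric])
  with \<open>(\<Sum>x\<in>L. sum r {i\<in>Q. r i = x}) = sum r Q\<close> show ?thesis by simp
qed

definition light :: "nat \<Rightarrow> nat set \<Rightarrow> int set \<Rightarrow> (nat \<Rightarrow> int) set" where
  "light s Q L = {r \<in> Q \<rightarrow>\<^sub>E L. \<forall>x. cnt Q r x \<le> s}"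

lemma LL_bound:
  assumes finL: "finite L" and finQ: "finite Q" and nk: "card Q \<le> k"
  shows "card {(r, r'). r \<in> light s Q L \<and> r' \<in> light s Q L \<and>
            (\<Sum>i\<in>Q. r i) mod int N = (\<Sum>i\<in>Q. r' i) mod int N}
         \<le> card L ^ card Q * card (Sset N (2*k) s L) * fact (card Q)"
proof -
  define S where "S = Sset N (2*k) s L"
  define X where "X = Q \<rightarrow>\<^sub>E L"
  define cc where "cc = (\<lambda>r (v::int\<Rightarrow>int) x. if x \<in> L then nat (int (cnt Q r x) - v x) else 0)"
  define F where "F = (\<lambda>r v. {r' \<in> Q \<rightarrow>\<^sub>E L. \<forall>x. cnt Q r' x = cc r v x})"
  define vd where "vd = (\<lambda>r r' x. if x \<in> L then int (cnt Q r x) - int (cnt Q r' x) else 0)"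
  have finS: "finite S" unfolding S_def Sset_def
    by (rule finite_subset[OF _ finite_box[OF finL, of s]]) auto
  have finX: "finite X" unfolding X_def using finL finQ by (simp add: finite_PiE)
  have finF: "finite (F r v)" for r v unfolding F_def by (rule finite_fibre[OF finQ])
  have sub: "{(r, r'). r \<in> light s Q L \<and> r' \<in> light s Q L \<and>
            (\<Sum>i\<in>Q. r i) mod int N = (\<Sum>i\<in>Q. r' i) mod int N} \<subseteq> (\<Union>r\<in>X. \<Union>v\<in>S. {r} \<times> F r v)"
  proof
    fix p assume "p \<in> {(r, r'). r \<in> light s Q L \<and> r' \<in> light s Q L \<and>
            (\<Sum>i\<in>Q. r i) mod int N = (\<Sum>i\<in>Q. r' i) mod int N}"
    then obtain r r' where p: "p = (r, r')" and r: "r \<in> light s Q L" and r': "r' \<in> light s Q L"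
      and eq: "(\<Sum>i\<in>Q. r i) mod int N = (\<Sum>i\<in>Q. r' i) mod int N" by blast
    have rX: "r \<in> Q \<rightarrow>\<^sub>E L" and rs: "\<forall>x. cnt Q r x \<le> s" using r by (auto simp: light_def)
    have r'X: "r' \<in> Q \<rightarrow>\<^sub>E L" and r's: "\<forall>x. cnt Q r' x \<le> s" using r' by (auto simp: light_def)
    have vbox: "vd r r' \<in> box L s"
    proof -
      have "\<bar>int (cnt Q r x) - int (cnt Q r' x)\<bar> \<le> int s" for x
      proof -
        have "int (cnt Q r x) \<le> int s" "int (cnt Q r' x) \<le> int s" using rs r's by simp_all
        then show ?thesis unfolding abs_le_iff by linarith
      qed
      then show ?thesis by (auto simp: box_def vd_def)
    qed
    have vsum: "(\<Sum>x\<in>L. \<bar>vd r r' x\<bar>) \<le> int (2*k)"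
    proof -
      have "(\<Sum>x\<in>L. \<bar>vd r r' x\<bar>) \<le> (\<Sum>x\<in>L. int (cnt Q r x) + int (cnt Q r' x))"
        by (rule sum_mono) (auto simp: vd_def)
      also have "\<dots> = int (\<Sum>x\<in>L. cnt Q r x) + int (\<Sum>x\<in>L. cnt Q r' x)"
        by (simp add: sum.distrib)
      also have "\<dots> = int (card Q) + int (card Q)"
        using sum_cnt[OF rX finQ finL] sum_cnt[OF r'X finQ finL] by simp
      also have "\<dots> \<le> int (2*k)" using nk by simp
      finally show ?thesis .
    qed
    have vmod: "(\<Sum>x\<in>L. x * vd r r' x) mod int N = 0"
    proof -
      have "(\<Sum>x\<in>L. x * vd r r' x) = (\<Sum>x\<in>L. x * int (cnt Q r x)) - (\<Sum>x\<in>L. x * int (cnt Q r' x))"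
        by (simp add: vd_def sum_subtractf[symmetric] right_diff_distrib)
      also have "\<dots> = (\<Sum>i\<in>Q. r i) - (\<Sum>i\<in>Q. r' i)"
        using sum_wcnt[OF rX finQ finL] sum_wcnt[OF r'X finQ finL] by simp
      finally show ?thesis using eq by (simp add: mod_eq_dvd_iff)
    qed
    have vS: "vd r r' \<in> S" using vbox vsum vmod by (simp add: S_def Sset_def)
    have "\<forall>x. cnt Q r' x = cc r (vd r r') x"
    proof
      fix x show "cnt Q r' x = cc r (vd r r') x"
        using cnt_out[OF r'X, of x] by (auto simp: cc_def vd_def)
    qed
    then have "r' \<in> F r (vd r r')" using r'X by (simp add: F_def)
    then show "p \<in> (\<Union>r\<in>X. \<Union>v\<in>S. {r} \<times> F r v)" using p rX vS by (auto simp: X_def)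
  qed
  have "card {(r, r'). r \<in> light s Q L \<and> r' \<in> light s Q L \<and>
            (\<Sum>i\<in>Q. r i) mod int N = (\<Sum>i\<in>Q. r' i) mod int N} \<le> card (\<Union>r\<in>X. \<Union>v\<in>S. {r} \<times> F r v)"
    by (rule card_mono[OF _ sub]) (use finX finS finF in auto)
  also have "\<dots> \<le> (\<Sum>r\<in>X. card (\<Union>v\<in>S. {r} \<times> F r v))" by (rule card_UN_le[OF finX])
  also have "\<dots> \<le> (\<Sum>r\<in>X. \<Sum>v\<in>S. card ({r} \<times> F r v))"
    by (rule sum_mono) (rule card_UN_le[OF finS])
  also have "\<dots> \<le> (\<Sum>r\<in>X. \<Sum>v\<in>S. fact (card Q))"
  proof (intro sum_mono)
    fix r v
    have "card ({r} \<times> F r v) = card (F r v)" by (simp add: card_cartesian_product)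
    also have "\<dots> \<le> fact (card Q)" unfolding F_def by (rule fibre_count[OF finQ])
    finally show "card ({r} \<times> F r v) \<le> fact (card Q)" .
  qed
  also have "\<dots> = card X * card S * fact (card Q)" by simp
  also have "card X = card L ^ card Q" unfolding X_def using finQ by (simp add: card_PiE)
  finally show ?thesis by (simp add: S_def)
qed

definition ext :: "nat set \<Rightarrow> int \<Rightarrow> (nat \<Rightarrow> int) \<Rightarrow> nat \<Rightarrow> int" where
  "ext P x a = (\<lambda>i. if i \<in> P then x else a i)"

lemma sum_ext:
  assumes "finite Q" "P \<subseteq> Q"
  shows "(\<Sum>i\<in>Q. ext P x a i) = int (card P) * x + (\<Sum>i\<in>Q-P. a i)"
proof -
  have "(\<Sum>i\<in>Q. ext P x a i) = (\<Sum>i\<in>Q-P. ext P x a i) + (\<Sum>i\<in>P. ext P x a i)"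
    by (rule sum.subset_diff[OF assms(2,1)])
  moreover have "(\<Sum>i\<in>Q-P. ext P x a i) = (\<Sum>i\<in>Q-P. a i)" by (rule sum.cong) (auto simp: ext_def)
  moreover have "(\<Sum>i\<in>P. ext P x a i) = (\<Sum>i\<in>P. x)" by (rule sum.cong) (auto simp: ext_def)
  ultimately show ?thesis by simp
qed

lemma ext_restrict:
  assumes "r \<in> Q \<rightarrow>\<^sub>E L" "P \<subseteq> Q" "\<forall>i\<in>P. r i = x"
  shows "ext P x (restrict r (Q-P)) = r"
proof
  fix i show "ext P x (restrict r (Q - P)) i = r i"
    using assms by (cases "i \<in> Q") (auto simp: ext_def PiE_def extensional_def)
qed

lemma mod_shift_iff: "((c::int) + u) mod n = (c + w) mod n \<longleftrightarrow> u mod n = w mod n"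
  by (simp add: mod_eq_dvd_iff)

lemma shifted_T:
  assumes "finite Q" "P \<subseteq> Q"
  shows "card {(a,b). a \<in> (Q-P) \<rightarrow>\<^sub>E L \<and> b \<in> (Q-P) \<rightarrow>\<^sub>E L \<and>
      (\<Sum>i\<in>Q. ext P x a i) mod int N = (\<Sum>i\<in>Q. ext P x b i) mod int N} = TQ N L (Q-P)"
proof -
  have "{(a,b). a \<in> (Q-P) \<rightarrow>\<^sub>E L \<and> b \<in> (Q-P) \<rightarrow>\<^sub>E L \<and>
      (\<Sum>i\<in>Q. ext P x a i) mod int N = (\<Sum>i\<in>Q. ext P x b i) mod int N} =
    {(a,b). a \<in> (Q-P) \<rightarrow>\<^sub>E L \<and> b \<in> (Q-P) \<rightarrow>\<^sub>E L \<and>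
      (\<Sum>i\<in>Q-P. a i) mod int N = (\<Sum>i\<in>Q-P. b i) mod int N}"
    using sum_ext[OF assms, of x] mod_shift_iff by auto
  then show ?thesis by (simp add: TQ_def)
qed

lemma TQ_split:
  fixes Lt :: "(nat \<Rightarrow> int) set"
  assumes finX: "finite X" and LtX: "Lt \<subseteq> X"
  shows "card {(r, r'). r \<in> X \<and> r' \<in> X \<and> f r = f r'} \<le>
     2 * card {(r, r'). r \<in> Lt \<and> r' \<in> Lt \<and> f r = f r'} + 2 * card {(r, r'). r \<in> X - Lt \<and> r' \<in> X - Lt \<and> f r = f r'}"
proof -
  define H where "H = X - Lt"
  have finLt: "finite Lt" using finX LtX finite_subset by blast
  have finH: "finite H" using finX by (simp add: H_def)
  define P where "P = (\<lambda>A B. {(r, r'). r \<in> A \<and> r' \<in> B \<and> f r = f r'})"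
  have finP: "finite (P A B)" if "finite A" "finite B" for A B
    by (rule finite_subset[of _ "A \<times> B"]) (use that in \<open>auto simp: P_def\<close>)
  have "P X X = P Lt Lt \<union> P Lt H \<union> P H Lt \<union> P H H" using LtX by (auto simp: P_def H_def)
  then have "card (P X X) \<le> card (P Lt Lt \<union> P Lt H \<union> P H Lt) + card (P H H)"
    by (simp only: card_Un_le)
  also have "card (P Lt Lt \<union> P Lt H \<union> P H Lt) \<le> card (P Lt Lt \<union> P Lt H) + card (P H Lt)"
    by (rule card_Un_le)
  also have "card (P Lt Lt \<union> P Lt H) \<le> card (P Lt Lt) + card (P Lt H)"
    by (rule card_Un_le)
  finally have "card (P X X) \<le> card (P Lt Lt) + card (P Lt H) + card (P H Lt) + card (P H H)" by simp
  moreover have "2 * card (P Lt H) \<le> card (P Lt Lt) + card (P H H)"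
    unfolding P_def by (rule amgm_pairs[OF finLt finH])
  moreover have "2 * card (P H Lt) \<le> card (P H H) + card (P Lt Lt)"
    unfolding P_def by (rule amgm_pairs[OF finH finLt])
  ultimately show ?thesis unfolding P_def H_def by linarith
qed

lemma heavy_cover:
  assumes finQ: "finite Q" and r: "r \<in> (Q \<rightarrow>\<^sub>E L) - light s Q L"
  shows "\<exists>P x. P \<subseteq> Q \<and> card P = s+1 \<and> x \<in> L \<and> r \<in> ext P x ` ((Q-P) \<rightarrow>\<^sub>E L)"
proof -
  have rX: "r \<in> Q \<rightarrow>\<^sub>E L" using r by simp
  have "\<not> (\<forall>x. cnt Q r x \<le> s)" using r by (simp add: light_def)
  then obtain x where "s < cnt Q r x" by (auto simp: not_le)
  then have "s+1 \<le> card {i\<in>Q. r i = x}" by (simp add: cnt_def)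
  then obtain P where P: "P \<subseteq> {i\<in>Q. r i = x}" "card P = s+1" "finite P"
    by (rule obtain_subset_with_card_n)
  have "P \<noteq> {}" using P(2) by auto
  then obtain i where i: "i \<in> P" by blast
  have "i \<in> Q" "r i = x" using i P(1) by auto
  then have xL: "x \<in> L" using rX by auto
  have PQ: "P \<subseteq> Q" using P by auto
  have e1: "ext P x (restrict r (Q-P)) = r" by (rule ext_restrict[OF rX PQ]) (use P in auto)
  have e2: "restrict r (Q-P) \<in> (Q-P) \<rightarrow>\<^sub>E L" using rX by auto
  have "r \<in> ext P x ` ((Q-P) \<rightarrow>\<^sub>E L)" by (rule image_eqI[where f="ext P x" and x="restrict r (Q-P)", OF e1[symmetric] e2])
  then show ?thesis using PQ P(2) xL by (intro exI[of _ P] exI[of _ x]) simp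
qed

lemma HH_bound:
  assumes finQ: "finite Q" and finL: "finite L" and sQ: "s+1 \<le> card Q"
    and IH: "\<And>Q'. finite Q' \<Longrightarrow> card Q' = card Q - (s+1) \<Longrightarrow> TQ N L Q' \<le> Bv"
  shows "card {(r, r'). r \<in> (Q \<rightarrow>\<^sub>E L) - light s Q L \<and> r' \<in> (Q \<rightarrow>\<^sub>E L) - light s Q L \<and>
            (\<Sum>i\<in>Q. r i) mod int N = (\<Sum>i\<in>Q. r' i) mod int N}
         \<le> ((card Q choose (s+1)) * card L)^2 * Bv"
proof -
  define Hv where "Hv = (Q \<rightarrow>\<^sub>E L) - light s Q L"
  define \<phi> where "\<phi> = (\<lambda>r::nat\<Rightarrow>int. (\<Sum>i\<in>Q. r i) mod int N)"
  define I where "I = {P. P \<subseteq> Q \<and> card P = s+1} \<times> L"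
  define W where "W = (\<lambda>p p'. {(a,b). a \<in> (Q - fst p) \<rightarrow>\<^sub>E L \<and> b \<in> (Q - fst p') \<rightarrow>\<^sub>E L \<and>
       \<phi> (ext (fst p) (snd p) a) = \<phi> (ext (fst p') (snd p') b)})"
  define E where "E = (\<lambda>p p'. (\<lambda>(a,b). (ext (fst p) (snd p) a, ext (fst p') (snd p') b)) ` W p p')"
  have finI: "finite I" unfolding I_def using finQ finL by (auto intro: finite_subset[of _ "Pow Q"])
  have cardI: "card I = (card Q choose (s+1)) * card L"
    unfolding I_def using n_subsets[OF finQ, of "s+1"] by (simp add: card_cartesian_product)
  have finW: "finite (W p p')" for p p'
    by (rule finite_subset[of _ "((Q - fst p) \<rightarrow>\<^sub>E L) \<times> ((Q - fst p') \<rightarrow>\<^sub>E L)"])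
       (use finQ finL in \<open>auto simp: W_def finite_PiE\<close>)
  have cardW: "card (W p p') \<le> Bv" if p: "p \<in> I" and p': "p' \<in> I" for p p'
  proof -
    obtain P x where px: "p = (P, x)" "P \<subseteq> Q" "card P = s+1" using p by (auto simp: I_def)
    obtain P' x' where px': "p' = (P', x')" "P' \<subseteq> Q" "card P' = s+1" using p' by (auto simp: I_def)
    have fin1: "finite ((Q - P) \<rightarrow>\<^sub>E L)" "finite ((Q - P') \<rightarrow>\<^sub>E L)" using finQ finL by (auto simp: finite_PiE)
    have "2 * card (W p p') \<le>
      card {(a,b). a \<in> (Q-P) \<rightarrow>\<^sub>E L \<and> b \<in> (Q-P) \<rightarrow>\<^sub>E L \<and> \<phi> (ext P x a) = \<phi> (ext P x b)} +
      card {(a,b). a \<in> (Q-P') \<rightarrow>\<^sub>E L \<and> b \<in> (Q-P') \<rightarrow>\<^sub>E L \<and> \<phi> (ext P' x' a) = \<phi> (ext P' x' b)}"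
      unfolding W_def px(1) px'(1) fst_conv snd_conv by (rule amgm_pairs[OF fin1])
    also have "\<dots> = TQ N L (Q-P) + TQ N L (Q-P')"
      using shifted_T[OF finQ px(2), where x=x and L=L and N=N] shifted_T[OF finQ px'(2), where x=x' and L=L and N=N] by (simp add: \<phi>_def)
    also have "\<dots> \<le> Bv + Bv"
    proof (rule add_mono)
      show "TQ N L (Q-P) \<le> Bv" by (rule IH) (use finQ px in \<open>auto simp: card_Diff_subset finite_subset\<close>)
      show "TQ N L (Q-P') \<le> Bv" by (rule IH) (use finQ px' in \<open>auto simp: card_Diff_subset finite_subset\<close>)
    qed
    finally show ?thesis by simp
  qed
  have sub: "{(r, r'). r \<in> Hv \<and> r' \<in> Hv \<and> \<phi> r = \<phi> r'} \<subseteq> (\<Union>p\<in>I. \<Union>p'\<in>I. E p p')"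
  proof
    fix q assume "q \<in> {(r, r'). r \<in> Hv \<and> r' \<in> Hv \<and> \<phi> r = \<phi> r'}"
    then obtain r r' where q: "q = (r, r')" and r: "r \<in> Hv" and r': "r' \<in> Hv" and eq: "\<phi> r = \<phi> r'" by blast
    obtain P x a where Px: "P \<subseteq> Q" "card P = s+1" "x \<in> L" "a \<in> (Q-P) \<rightarrow>\<^sub>E L" "r = ext P x a"
      using heavy_cover[OF finQ r[unfolded Hv_def]] by blast
    obtain P' x' a' where Px': "P' \<subseteq> Q" "card P' = s+1" "x' \<in> L" "a' \<in> (Q-P') \<rightarrow>\<^sub>E L" "r' = ext P' x' a'"
      using heavy_cover[OF finQ r'[unfolded Hv_def]] by blast
    have pI: "(P, x) \<in> I" "(P', x') \<in> I" using Px Px' by (auto simp: I_def)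
    have "(a, a') \<in> W (P, x) (P', x')" using Px Px' eq by (auto simp: W_def)
    then have "q \<in> E (P, x) (P', x')" unfolding E_def q using Px(5) Px'(5) by force
    then show "q \<in> (\<Union>p\<in>I. \<Union>p'\<in>I. E p p')" using pI by blast
  qed
  have finE: "finite (E p p')" for p p' unfolding E_def using finW by simp
  have "card {(r, r'). r \<in> Hv \<and> r' \<in> Hv \<and> \<phi> r = \<phi> r'} \<le> card (\<Union>p\<in>I. \<Union>p'\<in>I. E p p')"
    by (rule card_mono[OF _ sub]) (use finI finE in auto)
  also have "\<dots> \<le> (\<Sum>p\<in>I. card (\<Union>p'\<in>I. E p p'))" by (rule card_UN_le[OF finI])
  also have "\<dots> \<le> (\<Sum>p\<in>I. \<Sum>p'\<in>I. card (E p p'))" by (rule sum_mono) (rule card_UN_le[OF finI])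
  also have "\<dots> \<le> (\<Sum>p\<in>I. \<Sum>p'\<in>I. Bv)"
  proof (intro sum_mono)
    fix p p' assume "p \<in> I" "p' \<in> I"
    have "card (E p p') \<le> card (W p p')" unfolding E_def by (rule card_image_le[OF finW])
    also have "\<dots> \<le> Bv" by (rule cardW) fact+
    finally show "card (E p p') \<le> Bv" .
  qed
  also have "\<dots> = card I * card I * Bv" by simp
  finally show ?thesis unfolding cardI Hv_def \<phi>_def by (simp add: power2_eq_square)
qed

lemma arith_step:
  fixes Z m \<rho> C fa fn fs :: real and a s :: nat
  assumes Z: "Z \<ge> 0" and m: "m \<ge> 0" and \<rho>: "\<rho> \<ge> 1" and C: "C \<ge> 0" and fa: "fa \<ge> 0"
    and s1: "s \<ge> 1" and fs: "fs \<ge> 0" and feq: "C * fa * fs = fn"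
    and key: "2 * C \<le> fs * m^(s-1) * \<rho>^(s+1)"
  shows "2 * (m^(a+s+1) * Z * fn) + 2 * ((C*m)^2 * (2*Z*fa*m^a*(a+1)*\<rho>^a))
         \<le> 2 * Z * fn * m^(a+s+1) * (a+s+2) * \<rho>^(a+s+1)"
proof -
  define K where "K = 2*Z*(a+1)*m^(a+2)*\<rho>^a*(C*fa)"
  have K0: "K \<ge> 0" unfolding K_def using Z m \<rho> C fa by simp
  have "2 * ((C*m)^2 * (2*Z*fa*m^a*(a+1)*\<rho>^a)) = K * (2*C)"
    unfolding K_def by (simp add: power2_eq_square power_add algebra_simps)
  also have "\<dots> \<le> K * (fs * m^(s-1) * \<rho>^(s+1))" by (rule mult_left_mono[OF key K0])
  also have "\<dots> = 2*Z*(a+1)*(C*fa*fs)*(m^(a+2)*m^(s-1))*(\<rho>^a*\<rho>^(s+1))"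
    unfolding K_def by (simp add: algebra_simps)
  also have "m^(a+2)*m^(s-1) = m^(a+s+1)"
  proof -
    have "a+2+(s-1) = a+s+1" using s1 by simp
    then show ?thesis by (metis power_add)
  qed
  also have "\<rho>^a*\<rho>^(s+1) = \<rho>^(a+s+1)" by (simp add: power_add)
  finally have T2: "2 * ((C*m)^2 * (2*Z*fa*m^a*(a+1)*\<rho>^a)) \<le> 2*Z*(a+1)*fn*m^(a+s+1)*\<rho>^(a+s+1)"
    using feq by simp
  have r1: "1 \<le> (s+1) * \<rho>^(a+s+1)"
  proof -
    have "1 \<le> \<rho>^(a+s+1)" using \<rho> by (rule one_le_power)
    also have "\<dots> \<le> (s+1) * \<rho>^(a+s+1)" using \<rho> by simp
    finally show ?thesis .
  qed
  have fn0: "fn \<ge> 0" using feq C fa fs by (metis mult_nonneg_nonneg)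
  have B0: "2*Z*fn*m^(a+s+1) \<ge> 0" using Z fn0 m by simp
  have T1: "2 * (m^(a+s+1) * Z * fn) \<le> 2*Z*fn*m^(a+s+1) * ((s+1) * \<rho>^(a+s+1))"
    using mult_left_mono[OF r1 B0] by (simp add: algebra_simps)
  have "2 * (m^(a+s+1) * Z * fn) + 2 * ((C*m)^2 * (2*Z*fa*m^a*(a+1)*\<rho>^a)) \<le>
     2*Z*fn*m^(a+s+1) * ((s+1) * \<rho>^(a+s+1)) + 2*Z*(a+1)*fn*m^(a+s+1)*\<rho>^(a+s+1)"
    using T1 T2 by linarith
  also have "\<dots> = 2 * Z * fn * m^(a+s+1) * (a+s+2) * \<rho>^(a+s+1)"
    by (simp add: algebra_simps)
  finally show ?thesis .
qed

lemma TQ_main: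
  fixes \<rho> :: real and Z :: nat
  assumes finL: "finite L" and s1: "s \<ge> 1" and \<rho>1: "\<rho> \<ge> 1"
    and Zb: "card (Sset N (2*k) s L) \<le> Z"
    and key: "\<And>n. n \<le> k \<Longrightarrow> 2 * real (n choose (s+1)) \<le> fact (s+1) * real (card L)^(s-1) * \<rho>^(s+1)"
  shows "\<forall>Q. finite Q \<longrightarrow> card Q = n \<longrightarrow> n \<le> k \<longrightarrow>
     real (TQ N L Q) \<le> 2 * real Z * fact n * real (card L)^n * (n+1) * \<rho>^n"
proof (induction n rule: less_induct)
  case (less n)
  show ?case
  proof (intro allI impI)
    fix Q :: "nat set" assume finQ: "finite Q" and cQ: "card Q = n" and nk: "n \<le> k"
    define m where "m = card L"
    define X where "X = Q \<rightarrow>\<^sub>E L"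
    define \<phi> where "\<phi> = (\<lambda>r::nat\<Rightarrow>int. (\<Sum>i\<in>Q. r i) mod int N)"
    have finX: "finite X" unfolding X_def using finQ finL by (simp add: finite_PiE)
    have LtX: "light s Q L \<subseteq> X" by (auto simp: light_def X_def)
    have split: "TQ N L Q \<le> 2 * card {(r, r'). r \<in> light s Q L \<and> r' \<in> light s Q L \<and> \<phi> r = \<phi> r'}
        + 2 * card {(r, r'). r \<in> X - light s Q L \<and> r' \<in> X - light s Q L \<and> \<phi> r = \<phi> r'}"
      unfolding TQ_def using TQ_split[OF finX LtX, of \<phi>] by (simp add: X_def \<phi>_def)
    have LL: "card {(r, r'). r \<in> light s Q L \<and> r' \<in> light s Q L \<and> \<phi> r = \<phi> r'} \<le> m^n * Z * fact n"
    proof -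
      have "card {(r, r'). r \<in> light s Q L \<and> r' \<in> light s Q L \<and> \<phi> r = \<phi> r'}
         \<le> card L ^ card Q * card (Sset N (2*k) s L) * fact (card Q)"
        unfolding \<phi>_def by (rule LL_bound[OF finL finQ]) (use cQ nk in simp)
      also have "\<dots> \<le> m^n * Z * fact n" using Zb cQ by (simp add: m_def)
      finally show ?thesis .
    qed
    define B where "B = (\<lambda>j::nat. 2 * real Z * fact j * real m^j * (j+1) * \<rho>^j)"
    have B0: "B j \<ge> 0" for j unfolding B_def using \<rho>1 by simp
    show "real (TQ N L Q) \<le> 2 * real Z * fact n * real (card L)^n * (n+1) * \<rho>^n"
    proof (cases "n < s+1")
      case True
      have "X - light s Q L = {}"
      proof -
        have "r \<in> light s Q L" if r: "r \<in> X" for r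
        proof -
          have "cnt Q r x \<le> s" for x
          proof -
            have "cnt Q r x \<le> card Q" unfolding cnt_def by (rule card_mono[OF finQ]) auto
            then show ?thesis using True cQ by simp
          qed
          then show ?thesis using r by (simp add: light_def X_def)
        qed
        then show ?thesis by auto
      qed
      then have e: "{(r, r'). r \<in> X - light s Q L \<and> r' \<in> X - light s Q L \<and> \<phi> r = \<phi> r'} = {}" by blast
      have "TQ N L Q \<le> 2 * card {(r, r'). r \<in> light s Q L \<and> r' \<in> light s Q L \<and> \<phi> r = \<phi> r'}"
        using split unfolding e by simp
      then have "TQ N L Q \<le> 2 * (m^n * Z * fact n)" using LL by linarith
      then have "real (TQ N L Q) \<le> 2 * (real m^n * real Z * fact n)"
        by (metis (mono_tags, lifting) of_nat_fact of_nat_le_iff of_nat_mult of_nat_numeral of_nat_power)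
      also have "\<dots> \<le> B n"
      proof -
        have "1 \<le> \<rho>^n" using \<rho>1 by (rule one_le_power)
        also have "\<dots> \<le> (n+1) * \<rho>^n" using \<rho>1 by simp
        finally have "1 \<le> (n+1) * \<rho>^n" .
        from mult_left_mono[OF this, of "2 * (real m^n * real Z * fact n)"]
        show ?thesis unfolding B_def by (simp add: algebra_simps)
      qed
      finally show ?thesis by (simp add: B_def m_def)
    next
      case False
      define a where "a = n - (s+1)"
      have na: "n = a + s + 1" using False by (simp add: a_def)
      have an: "a < n" using na by simp
      have IHa: "real (TQ N L Q') \<le> B a" if "finite Q'" "card Q' = a" for Q'
        using less.IH[OF an] that nk an unfolding B_def m_def by simp
      define Bv where "Bv = nat \<lfloor>B a\<rfloor>"
      have IHv: "TQ N L Q' \<le> Bv" if "finite Q'" "card Q' = card Q - (s+1)" for Q'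
      proof -
        have "real (TQ N L Q') \<le> B a" using IHa[OF that(1)] that(2) cQ a_def by simp
        then have "int (TQ N L Q') \<le> \<lfloor>B a\<rfloor>" by linarith
        then show ?thesis unfolding Bv_def by linarith
      qed
      have Bv_le: "real Bv \<le> B a" unfolding Bv_def using B0[of a] by linarith
      have sQ: "s + 1 \<le> card Q" using False cQ by simp
      have HH: "card {(r, r'). r \<in> X - light s Q L \<and> r' \<in> X - light s Q L \<and> \<phi> r = \<phi> r'}
           \<le> ((n choose (s+1)) * m)^2 * Bv"
        using HH_bound[OF finQ finL sQ IHv] unfolding X_def \<phi>_def m_def cQ .
      define C where "C = real (n choose (s+1))"
      have "real (TQ N L Q) \<le> 2 * real (m^n * Z * fact n) + 2 * real (((n choose (s+1)) * m)^2 * Bv)"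
        using split LL HH by linarith
      also have "\<dots> \<le> 2 * (real m^(a+s+1) * real Z * fact n) + 2 * ((C * real m)^2 * B a)"
      proof -
        have "real (((n choose (s+1)) * m)^2 * Bv) \<le> (C * real m)^2 * B a"
          using Bv_le unfolding C_def by (simp add: mult_left_mono)
        moreover have "real (m^n * Z * fact n) = real m^(a+s+1) * real Z * fact n"
        proof -
          have "a+s+1 = n" using na by simp
          then show ?thesis by simp
        qed
        ultimately show ?thesis by linarith
      qed
      also have "\<dots> \<le> 2 * real Z * fact n * real m^(a+s+1) * (a+s+2) * \<rho>^(a+s+1)"
        unfolding B_def
      proof (rule arith_step)
        show "0 \<le> real Z" "0 \<le> real m" "1 \<le> \<rho>" "0 \<le> C" "0 \<le> (fact a :: real)" "1 \<le> s"
          "0 \<le> (fact (s+1) :: real)" using \<rho>1 s1 by (simp_all add: C_def)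
        have "fact (s+1) * fact (n - (s+1)) * (n choose (s+1)) = (fact n :: nat)"
          by (rule binomial_fact_lemma) (use sQ cQ in simp)
        then have "real (fact (s+1) * fact a * (n choose (s+1))) = real (fact n)" by (simp add: a_def)
        then show "C * fact a * fact (s+1) = (fact n :: real)" unfolding C_def
          by (simp only: of_nat_mult of_nat_fact) (simp add: algebra_simps)
        show "2 * C \<le> fact (s+1) * real m^(s-1) * \<rho>^(s+1)" unfolding C_def m_def by (rule key[OF nk])
      qed
      finally show ?thesis using na by (simp add: m_def)
    qed
  qed
qed

lemma choose_le_pow: "(n::nat) choose r \<le> n ^ r"
proof (cases "r \<le> n")
  case True
  show ?thesis by (rule binomial_le_pow[OF True])
next
  case False
  then have "n choose r = 0" by (simp add: binomial_eq_0)
  then show ?thesis by (simp only:)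
qed

lemma log_ineq:
  fixes L M :: real and s :: nat
  assumes L: "L \<ge> 0" and M: "M \<ge> 0" and s: "s \<ge> 3"
  shows "L - (real s - 1) / (real s + 1) * M \<le> 2 * real s * L^2 / (2 * real s * L + (real s - 2) * M)"
proof (cases "L = 0")
  case True
  have "(real s - 1) / (real s + 1) * M \<ge> 0" using s M by simp
  then show ?thesis using True by simp
next
  case False
  then have Lp: "L > 0" using L by simp
  define \<alpha> where "\<alpha> = (real s - 1) / (real s + 1)"
  define D where "D = 2 * real s * L + (real s - 2) * M"
  have Dp: "D > 0" unfolding D_def using Lp M s by (simp add: add_pos_nonneg)
  have \<alpha>0: "\<alpha> \<ge> 0" unfolding \<alpha>_def using s by simp
  have h: "real s - 2 \<le> 2 * real s * \<alpha>"
  proof -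
    have S1: "real s \<ge> 1" using s by simp
    have "real s * 1 \<le> real s * real s" by (rule mult_left_mono) (use S1 in simp_all)
    moreover have "2 * real s * (real s - 1) - (real s - 2) * (real s + 1) = real s * real s - real s + 2"
      by (simp add: algebra_simps)
    ultimately have "(real s - 2) * (real s + 1) \<le> 2 * real s * (real s - 1)" by linarith
    then show ?thesis unfolding \<alpha>_def using s by (simp add: field_simps)
  qed
  have LM: "L * M \<ge> 0" using L M by simp
  have "(L - \<alpha> * M) * D = 2 * real s * L^2 + ((real s - 2) - 2 * real s * \<alpha>) * (L * M) - \<alpha> * (real s - 2) * M^2"
    unfolding D_def by (simp add: algebra_simps power2_eq_square)
  also have "\<dots> \<le> 2 * real s * L^2"
  proof -
    have "((real s - 2) - 2 * real s * \<alpha>) * (L * M) \<le> 0" using h LM by (simp add: mult_nonpos_nonneg)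
    moreover have "\<alpha> * (real s - 2) * M^2 \<ge> 0" using \<alpha>0 s by simp
    ultimately show ?thesis by linarith
  qed
  finally have "(L - \<alpha> * M) * D \<le> 2 * real s * L^2" .
  then have "L - \<alpha> * M \<le> 2 * real s * L^2 / D" using Dp by (simp add: pos_le_divide_eq)
  then show ?thesis by (simp add: \<alpha>_def D_def)
qed

lemma mono5:
  fixes a1 a2 a3 a4 a5 b1 b2 b3 b4 b5 :: real
  assumes "0 \<le> a1" "0 \<le> a2" "0 \<le> a3" "0 \<le> a4" "0 \<le> a5"
    "a1 \<le> b1" "a2 \<le> b2" "a3 \<le> b3" "a4 \<le> b4" "a5 \<le> b5"
  shows "a1 * a2 * a3 * a4 * a5 \<le> b1 * b2 * b3 * b4 * b5"
proof -
  have "a1 * a2 \<le> b1 * b2" by (rule mult_mono) (use assms in auto)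
  then have "a1 * a2 * a3 \<le> b1 * b2 * b3" by (rule mult_mono) (use assms in auto)
  then have "a1 * a2 * a3 * a4 \<le> b1 * b2 * b3 * b4" by (rule mult_mono) (use assms in auto)
  then show ?thesis by (rule mult_mono) (use assms in auto)
qed

theorem mainTheorem6:
  fixes N k s d :: nat and Lam :: "int set"
  assumes "k \<ge> 1" and "d \<ge> 1" and "s \<ge> 3"
    and "prime N" and "N \<ge> s + 1"
    and "in_Lambda_family N d (2 * k) s Lam"
  shows "real (T_k N k Lam) \<le>
    2 ^ (9 * k) * real k ^ k * real (card Lam) ^ k * real (s + 1) ^ (2 * d) *
    2 powr (2 * real s * real k * (log 2 (real k))\<^sup>2 /
            log 2 (real k ^ (2 * s) * real (card Lam) ^ (s - 2)))"
proof -
  note k1 = assms(1) and d1 = assms(2) and s3 = assms(3) and fam = assms(6)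
  have finL: "finite Lam" using fam unfolding in_Lambda_family_def zn_set_def
    using finite_atLeastLessThan_int finite_subset by blast
  define m where "m = card Lam"
  define E where "E = 2 powr (2 * real s * real k * (log 2 (real k))\<^sup>2 /
            log 2 (real k ^ (2 * s) * real (card Lam) ^ (s - 2)))"
  have E0: "E \<ge> 0" by (simp add: E_def)
  show ?thesis
  proof (cases "m = 0")
    case True
    then have L0: "Lam = {}" using finL by (simp add: m_def)
    have "{0..<k} \<rightarrow>\<^sub>E Lam = {}" using k1 L0 by (auto simp: PiE_eq_empty_iff intro!: exI[of _ 0])
    then have "T_k N k Lam = 0" unfolding T_k_TQ TQ_def by simp
    moreover have "real (card Lam) ^ k = 0" using True k1 by (simp add: m_def)
    ultimately show ?thesis by simp
  next
    case False
    then have m1: "m \<ge> 1" by simp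
    define Z where "Z = card (Sset N (2*k) s Lam)"
    have Ssub: "Sset N (2*k) s Lam \<subseteq> box Lam s" by (auto simp: Sset_def)
    have Zb: "Z \<le> (2*s+1)^(d-1)" unfolding Z_def
      by (rule box_count[OF finL Ssub d1 family_dep[OF fam d1]])
    define \<alpha> where "\<alpha> = (real s - 1) / (real s + 1)"
    define \<rho> where "\<rho> = max 1 (real k * real m powr (- \<alpha>))"
    have \<rho>1: "\<rho> \<ge> 1" by (simp add: \<rho>_def)
    have mpos: "real m > 0" using m1 by simp
    have kpow: "real k ^ (s+1) \<le> real m ^ (s-1) * \<rho> ^ (s+1)"
    proof -
      have b0: "0 \<le> real k * real m powr (- \<alpha>)" by simp
      have "(real k * real m powr (- \<alpha>)) ^ (s+1) \<le> \<rho> ^ (s+1)"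
        by (rule power_mono) (use b0 in \<open>simp_all add: \<rho>_def\<close>)
      moreover have "(real k * real m powr (- \<alpha>)) ^ (s+1) = real k ^ (s+1) * real m powr (- (real s - 1))"
      proof -
        have "(real m powr (- \<alpha>)) ^ (s+1) = real m powr (real (s+1) * (- \<alpha>))"
          by (rule powr_power) (use mpos in simp)
        also have "real (s+1) * (- \<alpha>) = - (real s - 1)" unfolding \<alpha>_def by (simp add: field_simps)
        finally show ?thesis by (simp add: power_mult_distrib)
      qed
      moreover have "real m ^ (s-1) * real m powr (- (real s - 1)) = 1"
      proof -
        have "real m ^ (s-1) = real m powr (real s - 1)"
          using mpos s3 by (simp add: powr_realpow[symmetric] of_nat_diff)
        then show ?thesis using mpos by (simp add: powr_add[symmetric])
      qed
      ultimately have "real k ^ (s+1) * 1 \<le> real m ^ (s-1) * \<rho> ^ (s+1)"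
      proof -
        assume a: "(real k * real m powr - \<alpha>) ^ (s + 1) \<le> \<rho> ^ (s + 1)"
          and b: "(real k * real m powr - \<alpha>) ^ (s + 1) = real k ^ (s + 1) * real m powr - (real s - 1)"
          and c: "real m ^ (s - 1) * real m powr - (real s - 1) = 1"
        have "real k ^ (s+1) * 1 = real m ^ (s-1) * (real k ^ (s + 1) * real m powr - (real s - 1))"
          using c by (simp add: algebra_simps)
        also have "\<dots> \<le> real m ^ (s-1) * \<rho> ^ (s+1)" unfolding b[symmetric] by (rule mult_left_mono[OF a]) simp
        finally show ?thesis .
      qed
      then show ?thesis by simp
    qed
    have key: "2 * real (n choose (s+1)) \<le> fact (s+1) * real (card Lam)^(s-1) * \<rho>^(s+1)" if nk: "n \<le> k" for n
    proof -
      have "real (n choose (s+1)) \<le> real k ^ (s+1)"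
      proof -
        have "n choose (s+1) \<le> n ^ (s+1)" by (rule choose_le_pow)
        also have "\<dots> \<le> k ^ (s+1)" by (rule power_mono[OF nk]) simp
        finally have "n choose (s+1) \<le> k ^ (s+1)" .
        then have "real (n choose (s+1)) \<le> real (k ^ (s+1))" by (rule of_nat_mono)
        then show ?thesis by (simp only: of_nat_power)
      qed
      moreover have "(2::real) \<le> fact (s+1)"
      proof -
        have "(fact 2 :: real) \<le> fact (s+1)" by (rule fact_mono) (use s3 in simp)
        then show ?thesis by simp
      qed
      ultimately have "2 * real (n choose (s+1)) \<le> fact (s+1) * real k ^ (s+1)"
        by (intro mult_mono) simp_all
      also have "\<dots> \<le> fact (s+1) * (real m ^ (s-1) * \<rho> ^ (s+1))"
        by (rule mult_left_mono[OF kpow]) simp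
      finally show ?thesis by (simp add: m_def algebra_simps)
    qed
    have main: "\<forall>Q. finite Q \<longrightarrow> card Q = k \<longrightarrow> k \<le> k \<longrightarrow>
       real (TQ N Lam Q) \<le> 2 * real Z * fact k * real (card Lam)^k * (k+1) * \<rho>^k"
      by (rule TQ_main[OF finL _ \<rho>1 _ key]) (use s3 in \<open>simp_all add: Z_def\<close>)
    have T1: "real (T_k N k Lam) \<le> 2 * real Z * fact k * real m^k * (k+1) * \<rho>^k"
      using main[rule_format, of "{0..<k}"] unfolding T_k_TQ m_def by simp
    have f1: "2 * (real k + 1) \<le> 2 ^ (9*k)"
    proof -
      have "k + 1 \<le> 2 ^ k" by (metis Suc_eq_plus1 Suc_leI less_exp)
      then have "2 * (k+1) \<le> (2::nat) ^ (k+1)" by simp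
      also have "\<dots> \<le> 2 ^ (9*k)" by (rule power_increasing) (use k1 in simp_all)
      finally have "2 * (k+1) \<le> (2::nat) ^ (9*k)" .
      then have "real (2 * (k+1)) \<le> real ((2::nat) ^ (9*k))" by (rule of_nat_mono)
      then show ?thesis by simp
    qed
    have f2: "real Z \<le> real (s+1) ^ (2*d)"
    proof -
      have "Z \<le> (2*s+1)^(d-1)" by (rule Zb)
      also have "\<dots> \<le> (2*s+1)^d" by (rule power_increasing) simp_all
      also have "\<dots> \<le> ((s+1)^2)^d" by (rule power_mono) (simp_all add: power2_eq_square)
      also have "\<dots> = (s+1)^(2*d)" by (simp add: power_mult)
      finally have "Z \<le> (s+1)^(2*d)" .
      then have "real Z \<le> real ((s+1)^(2*d))" by (rule of_nat_mono)
      then show ?thesis by (simp only: of_nat_power)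
    qed
    have f3: "(fact k :: real) \<le> real k ^ k" using fact_le_power[of k] by simp
    define LL where "LL = log 2 (real k)"
    define MM where "MM = log 2 (real m)"
    define e where "e = 2 * real s * LL^2 / (2 * real s * LL + (real s - 2) * MM)"
    have kpos: "real k > 0" using k1 by simp
    have LL0: "LL \<ge> 0" unfolding LL_def using k1 by simp
    have MM0: "MM \<ge> 0" unfolding MM_def using m1 by simp
    have Dlog: "log 2 (real k ^ (2 * s) * real (card Lam) ^ (s - 2)) = 2 * real s * LL + (real s - 2) * MM"
    proof -
      have "log 2 (real k ^ (2 * s) * real m ^ (s - 2)) = log 2 (real k ^ (2 * s)) + log 2 (real m ^ (s - 2))"
        using kpos mpos by (simp add: log_mult)
      also have "\<dots> = real (2*s) * LL + real (s-2) * MM"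
        unfolding LL_def MM_def using kpos mpos by (simp add: log_nat_power)
      also have "\<dots> = 2 * real s * LL + (real s - 2) * MM" using s3 by (simp add: of_nat_diff)
      finally show ?thesis by (simp add: m_def)
    qed
    have e0: "e \<ge> 0" unfolding e_def using LL0 MM0 s3 by simp
    have \<rho>e: "\<rho> \<le> 2 powr e"
    proof -
      have "1 \<le> 2 powr e" using powr_mono[OF e0, of 2] by simp
      moreover have "real k * real m powr (- \<alpha>) \<le> 2 powr e"
      proof -
        have "real k = 2 powr LL" unfolding LL_def using kpos by simp
        moreover have "real m powr (- \<alpha>) = 2 powr (- \<alpha> * MM)"
        proof -
          have "real m = 2 powr MM" unfolding MM_def using mpos by simp
          then have "real m powr (- \<alpha>) = (2 powr MM) powr (- \<alpha>)" by simp
          also have "\<dots> = 2 powr (- \<alpha> * MM)" by (simp add: powr_powr mult.commute)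
          finally show ?thesis .
        qed
        ultimately have "real k * real m powr (- \<alpha>) = 2 powr (LL - \<alpha> * MM)"
          by (simp add: powr_add[symmetric])
        also have "\<dots> \<le> 2 powr e"
        proof (rule powr_mono)
          show "LL - \<alpha> * MM \<le> e" unfolding e_def \<alpha>_def by (rule log_ineq[OF LL0 MM0 s3])
        qed simp
        finally show ?thesis .
      qed
      ultimately show ?thesis by (simp add: \<rho>_def)
    qed
    have f4: "\<rho>^k \<le> E"
    proof -
      have "\<rho>^k \<le> (2 powr e)^k" by (rule power_mono[OF \<rho>e]) (use \<rho>1 in simp)
      also have "\<dots> = 2 powr (real k * e)" by (simp add: powr_power)
      also have "real k * e = 2 * real s * real k * (log 2 (real k))\<^sup>2 /
            log 2 (real k ^ (2 * s) * real (card Lam) ^ (s - 2))"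
        unfolding e_def Dlog LL_def by (simp add: algebra_simps)
      finally show ?thesis unfolding E_def .
    qed
    have "real (T_k N k Lam) \<le> (2 * (real k + 1)) * fact k * real m^k * real Z * \<rho>^k"
      using T1 by (simp add: algebra_simps)
    also have "\<dots> \<le> 2 ^ (9*k) * real k ^ k * real m ^ k * real (s+1) ^ (2*d) * E"
    proof -
      have "0 \<le> \<rho>^k" using \<rho>1 by simp
      then show ?thesis by (intro mono5) (use f1 f2 f3 f4 in simp_all)
    qed
    finally show ?thesis unfolding E_def m_def .
  qed
qed

end
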